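(* Let $a>0$, $\phi_a(x)=e^{-ax^2}$, and $f=\sum_{k\in\mathbb{Z}}c_k\phi_a(\cdot-k)$ with $c\in\ell^\infty(\mathbb{Z})$. Let $\lambda\in\mathbb{R}$ be a zero of $f$ with multiplicity $m$. Then for every $l\in\frac{\pi}{a}\mathbb{Z}$, $\lambda+il$ is a zero of the entire extension of $f$ with the same multiplicity $m$. In particular, if $f^{(j)}(\lambda)=0$ for $j=0,\dots,m-1$, then $f^{(j)}(\lambda+il)=0$ for $j=0,\dots,m-1$ and all $l\in\frac{\pi}{a}\mathbb{Z}$.
   Context: The function $z\mapsto\sum_k c_k e^{-a(z-k)^2}$ is entire and extends $f$; this is the entire extension referred to. *)

theory Defs
  imports "HOL-Complex_Analysis.Complex_Analysis"
begin

definition gauss_ext :: "real \<Rightarrow> (int \<Rightarrow> real) \<Rightarrow> complex \<Rightarrow> complex" where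
  "gauss_ext a c z =
     (\<Sum>\<^sub>\<infinity>k::int. complex_of_real (c k) * exp (- complex_of_real a * (z - of_int k)^2))"

definition zero_mult :: "(complex \<Rightarrow> complex) \<Rightarrow> complex \<Rightarrow> nat \<Rightarrow> bool" where
  "zero_mult F z0 m \<longleftrightarrow> 1 \<le> m \<and> (\<forall>j<m. (deriv ^^ j) F z0 = 0) \<and> (deriv ^^ m) F z0 \<noteq> 0"

end

theory Submission
  imports Defs
begin

lemma summable_exp_int:
  fixes b :: real assumes b: "b > 0"
  shows "(\<lambda>k::int. exp (- b * real_of_int \<bar>k\<bar>)) summable_on UNIV"
proof -
  have U: "(UNIV::int set) = range int \<union> range (\<lambda>n. - int n - 1)"
  proof -
    have "k \<in> range int \<union> range (\<lambda>n. - int n - 1)" for k :: int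
    proof (cases "k \<ge> 0")
      case True then show ?thesis by (metis UnI1 nonneg_int_cases rangeI)
    next
      case False
      then have "k = - int (nat (-k-1)) - 1" by simp
      then show ?thesis by blast
    qed
    then show ?thesis by blast
  qed
  have D: "range int \<inter> range (\<lambda>n. - int n - 1) = {}" by auto
  have q: "exp (-b) < 1" using b by simp
  have g: "summable (\<lambda>n. norm (exp (-b) ^ n))"
    using q by (simp add: summable_geometric)
  have 1: "(\<lambda>k::int. exp (- b * real_of_int \<bar>k\<bar>)) summable_on range int"
  proof (subst summable_on_reindex)
    show "inj_on int UNIV" by (simp add: inj_on_def)
    have "((\<lambda>k::int. exp (- b * real_of_int \<bar>k\<bar>)) \<circ> int) = (\<lambda>n. exp (-b) ^ n)"
      by (auto simp: exp_of_nat_mult[symmetric] mult.commute)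
    then show "((\<lambda>k::int. exp (- b * real_of_int \<bar>k\<bar>)) \<circ> int) summable_on UNIV"
      using norm_summable_imp_summable_on[OF g] by simp
  qed
  have 2: "(\<lambda>k::int. exp (- b * real_of_int \<bar>k\<bar>)) summable_on range (\<lambda>n. - int n - 1)"
  proof (subst summable_on_reindex)
    show "inj_on (\<lambda>n. - int n - 1) UNIV" by (simp add: inj_on_def)
    have "((\<lambda>k::int. exp (- b * real_of_int \<bar>k\<bar>)) \<circ> (\<lambda>n. - int n - 1)) = (\<lambda>n. exp (-b) * exp (-b) ^ n)"
    proof
      fix n :: nat
      have "\<bar>- int n - 1\<bar> = int n + 1" by simp
      then have "exp (- b * real_of_int \<bar>- int n - 1\<bar>) = exp (-b + real n * (-b))"
        by (simp add: algebra_simps)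
      also have "\<dots> = exp (-b) * exp (-b) ^ n" by (simp only: exp_add exp_of_nat_mult)
      finally show "((\<lambda>k::int. exp (- b * real_of_int \<bar>k\<bar>)) \<circ> (\<lambda>n. - int n - 1)) n = exp (-b) * exp (-b) ^ n"
        by simp
    qed
    then show "((\<lambda>k::int. exp (- b * real_of_int \<bar>k\<bar>)) \<circ> (\<lambda>n. - int n - 1)) summable_on UNIV"
      using summable_on_cmult_right[OF norm_summable_imp_summable_on[OF g]] by simp
  qed
  show ?thesis using summable_on_Un_disjoint[OF 1 2 D] U by simp
qed

lemma term_bound:
  fixes a R C :: real and z :: complex and k :: int and ck :: real
  assumes a: "a > 0" and z: "norm z \<le> R" and C: "\<bar>ck\<bar> \<le> C"
  shows "norm (complex_of_real ck * exp (- complex_of_real a * (z - of_int k)^2))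
    \<le> C * exp (a * (R^2 + 2*R + 1)) * exp (- (2*a) * real_of_int \<bar>k\<bar>)"
proof -
  define x where "x = Re z"
  define y where "y = Im z"
  have x: "\<bar>x\<bar> \<le> R" using z abs_Re_le_cmod[of z] x_def by linarith
  have y: "\<bar>y\<bar> \<le> R" using z abs_Im_le_cmod[of z] y_def by linarith
  have y2: "y^2 \<le> R^2" using y by (metis abs_ge_zero power2_abs power_mono)
  have re: "Re (- complex_of_real a * (z - of_int k)^2) = - a * ((x - k)^2 - y^2)"
    by (simp add: x_def y_def power2_eq_square algebra_simps)
  have t1: "(x - k)^2 \<ge> 2 * \<bar>x - k\<bar> - 1"
  proof -
    define t where "t = \<bar>x - k\<bar>"
    have "(x - k)^2 = t^2" by (simp add: t_def)
    moreover have "0 \<le> (t - 1)^2" by simp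
    moreover have "(t - 1)^2 = t^2 - 2*t + 1" by (simp add: power2_diff)
    ultimately have "2*t - 1 \<le> t^2" by linarith
    then show ?thesis using \<open>(x - k)^2 = t^2\<close> unfolding t_def by linarith
  qed
  have t2: "\<bar>x - k\<bar> \<ge> \<bar>k\<bar> - R" using x by linarith
  have key: "(x - k)^2 - y^2 \<ge> 2 * real_of_int \<bar>k\<bar> - (R^2 + 2*R + 1)" using t1 t2 y2 by (smt (verit))
  have ineq: "- a * ((x - k)^2 - y^2) \<le> a * (R^2 + 2*R + 1) + (- (2*a) * real_of_int \<bar>k\<bar>)"
    using mult_left_mono[OF key, of a] a by (simp add: algebra_simps)
  have e: "norm (exp (- complex_of_real a * (z - of_int k)^2)) \<le> exp (a * (R^2 + 2*R + 1)) * exp (- (2*a) * real_of_int \<bar>k\<bar>)"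
  proof -
    have "norm (exp (- complex_of_real a * (z - of_int k)^2)) = exp (Re (- complex_of_real a * (z - of_int k)^2))"
      by (rule norm_exp_eq_Re)
    also have "\<dots> = exp (- a * ((x - k)^2 - y^2))" by (simp only: re)
    also have "\<dots> \<le> exp (a * (R^2 + 2*R + 1) + (- (2*a) * real_of_int \<bar>k\<bar>))"
      using ineq by (simp only: exp_le_cancel_iff)
    also have "\<dots> = exp (a * (R^2 + 2*R + 1)) * exp (- (2*a) * real_of_int \<bar>k\<bar>)" by (rule exp_add)
    finally show ?thesis .
  qed
  have "norm (complex_of_real ck * exp (- complex_of_real a * (z - of_int k)^2))
       = \<bar>ck\<bar> * norm (exp (- complex_of_real a * (z - of_int k)^2))"
    by (simp add: norm_mult)
  also have "\<dots> \<le> C * (exp (a * (R^2 + 2*R + 1)) * exp (- (2*a) * real_of_int \<bar>k\<bar>))"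
    by (rule mult_mono[OF C e]) (use C in auto)
  finally show ?thesis by (simp add: mult.assoc)
qed


lemma gauss_holo:
  assumes a: "a > 0" and bd: "bounded (range c)"
  shows "gauss_ext a c holomorphic_on UNIV"
proof -
  obtain C where C: "\<And>k. \<bar>c k\<bar> \<le> C"
    using bd unfolding bounded_iff by auto
  define t where "t = (\<lambda>k::int. \<lambda>z. complex_of_real (c k) * exp (- complex_of_real a * (z - of_int k)^2))"
  have G: "gauss_ext a c = (\<lambda>z. \<Sum>\<^sub>\<infinity>k\<in>UNIV. t k z)"
    by (simp add: gauss_ext_def t_def fun_eq_iff)
  have tholo: "(\<lambda>z. \<Sum>k\<in>X. t k z) holomorphic_on UNIV" for X
    unfolding t_def by (intro holomorphic_intros)
  have "gauss_ext a c field_differentiable at z0" for z0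
  proof -
    define R where "R = norm z0 + 1"
    have ul: "uniform_limit (cball 0 R) (\<lambda>X z. \<Sum>k\<in>X. t k z) (\<lambda>z. \<Sum>\<^sub>\<infinity>k\<in>UNIV. t k z) (finite_subsets_at_top UNIV)"
    proof (rule Weierstrass_m_test_general)
      show "norm (t k z) \<le> C * exp (a * (R^2 + 2*R + 1)) * exp (- (2*a) * real_of_int \<bar>k\<bar>)"
        if "k \<in> UNIV" "z \<in> cball 0 R" for k z
        unfolding t_def using that by (intro term_bound[OF a _ C]) auto
      show "(\<lambda>k. C * exp (a * (R^2 + 2*R + 1)) * exp (- (2*a) * real_of_int \<bar>k\<bar>)) summable_on UNIV"
        using summable_on_cmult_right[OF summable_exp_int[of "2*a"], of "C * exp (a * (R^2 + 2*R + 1))"] a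
        by (simp add: mult.assoc)
    qed
    obtain "(\<lambda>z. \<Sum>\<^sub>\<infinity>k\<in>UNIV. t k z) holomorphic_on ball 0 R"
    proof (rule holomorphic_uniform_limit[OF _ ul])
      show "\<forall>\<^sub>F X in finite_subsets_at_top UNIV. continuous_on (cball 0 R) (\<lambda>z. \<Sum>k\<in>X. t k z) \<and> (\<lambda>z. \<Sum>k\<in>X. t k z) holomorphic_on ball 0 R"
        using tholo holomorphic_on_imp_continuous_on holomorphic_on_subset
        by (metis (no_types, lifting) always_eventually continuous_on_subset subset_UNIV)
    qed auto
    then have "gauss_ext a c holomorphic_on ball 0 R" by (simp add: G)
    moreover have "z0 \<in> ball 0 R" by (simp add: R_def)
    ultimately show ?thesis
      using holomorphic_on_imp_differentiable_at open_ball by blast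
  qed
  then show ?thesis by (simp add: holomorphic_on_def field_differentiable_at_within)
qed

lemma gauss_shift:
  assumes a: "a > 0"
  shows "gauss_ext a c (z + \<i> * complex_of_real (pi / a * of_int n)) =
    exp (complex_of_real a * (complex_of_real (pi / a * of_int n))^2 - 2 * \<i> * complex_of_real a * complex_of_real (pi / a * of_int n) * z) * gauss_ext a c z"
proof -
  define L where "L = complex_of_real (pi / a * of_int n)"
  define A where "A = complex_of_real a"
  have AL: "A * L = of_real pi * of_int n" using a by (simp add: A_def L_def)
  have tm: "complex_of_real (c k) * exp (- A * (z + \<i> * L - of_int k)^2) =
     exp (A * L^2 - 2 * \<i> * A * L * z) * (complex_of_real (c k) * exp (- A * (z - of_int k)^2))" for k :: int
  proof -
    have e: "- A * (z + \<i> * L - of_int k)^2 = (A * L^2 - 2 * \<i> * A * L * z) + (- A * (z - of_int k)^2) + (2 * of_int (n*k) * of_real pi) * \<i>"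
    proof -
      have "- A * (z + \<i> * L - of_int k)^2 = (A * L^2 - 2 * \<i> * A * L * z) + (- A * (z - of_int k)^2) + 2 * \<i> * (A * L) * of_int k"
        by (simp add: power2_eq_square algebra_simps)
      also have "2 * \<i> * (A * L) * of_int k = (2 * of_int (n*k) * of_real pi) * \<i>"
        by (simp add: AL)
      finally show ?thesis .
    qed
    have one: "exp ((2 * of_int (n*k) * of_real pi) * \<i>) = 1"
      using exp_integer_2pi[of "of_int (n*k)"] by simp
    have ex: "exp (- A * (z + \<i> * L - of_int k)^2) = exp (A * L^2 - 2 * \<i> * A * L * z) * exp (- A * (z - of_int k)^2)"
      by (simp only: e exp_add one mult_1_right)
    show ?thesis unfolding ex by (simp only: ac_simps)
  qed
  show ?thesis
    unfolding gauss_ext_def L_def[symmetric] A_def[symmetric]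
    by (simp only: tm infsum_cmult_right')
qed


lemma shift_deriv:
  assumes a: "a > 0" and bd: "bounded (range c)"
  shows "(deriv ^^ j) (gauss_ext a c) (z0 + \<i> * complex_of_real (pi / a * of_int n)) =
    (\<Sum>i = 0..j. of_nat (j choose i) *
       (deriv ^^ i) (\<lambda>z. exp (complex_of_real a * (complex_of_real (pi / a * of_int n))^2 - 2 * \<i> * complex_of_real a * complex_of_real (pi / a * of_int n) * z)) z0
       * (deriv ^^ (j - i)) (gauss_ext a c) z0)"
proof -
  define F where "F = gauss_ext a c"
  define s where "s = \<i> * complex_of_real (pi / a * of_int n)"
  define E where "E = (\<lambda>z. exp (complex_of_real a * (complex_of_real (pi / a * of_int n))^2 - 2 * \<i> * complex_of_real a * complex_of_real (pi / a * of_int n) * z))"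
  have HF: "F holomorphic_on UNIV" unfolding F_def by (rule gauss_holo[OF a bd])
  have HE: "E holomorphic_on UNIV" unfolding E_def by (intro holomorphic_intros)
  have "(deriv ^^ j) (\<lambda>w. F (1*w + s)) z0 = 1^j * (deriv ^^ j) F (1*z0 + s)"
    by (rule higher_deriv_compose_linear'[OF HF open_UNIV open_UNIV]) auto
  moreover have "(\<lambda>w. F (1*w + s)) = (\<lambda>w. E w * F w)"
    unfolding F_def E_def s_def by (rule ext) (simp only: mult_1_left gauss_shift[OF a])
  moreover have "(deriv ^^ j) (\<lambda>w. E w * F w) z0 = (\<Sum>i = 0..j. of_nat (j choose i) * (deriv ^^ i) E z0 * (deriv ^^ (j - i)) F z0)"
    by (rule higher_deriv_mult[OF HE HF open_UNIV]) auto
  ultimately show ?thesis by (simp add: F_def E_def s_def)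
qed

theorem lemma4p2:
  fixes a :: real and c :: "int \<Rightarrow> real" and lam :: real and m :: nat
  assumes "a > 0"
    and "bounded (range c)"
  shows "(zero_mult (gauss_ext a c) (complex_of_real lam) m \<longrightarrow>
            (\<forall>n::int. zero_mult (gauss_ext a c)
                (complex_of_real lam + \<i> * complex_of_real (pi / a * of_int n)) m))
       \<and> ((\<forall>j<m. (deriv ^^ j) (gauss_ext a c) (complex_of_real lam) = 0) \<longrightarrow>
            (\<forall>n::int. \<forall>j<m. (deriv ^^ j) (gauss_ext a c)
                (complex_of_real lam + \<i> * complex_of_real (pi / a * of_int n)) = 0))"
proof -
  note SD = shift_deriv[OF assms, of _ "complex_of_real lam"]
  have P2: "(deriv ^^ j) (gauss_ext a c) (complex_of_real lam + \<i> * complex_of_real (pi / a * of_int n)) = 0"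
    if Z: "\<forall>j<m. (deriv ^^ j) (gauss_ext a c) (complex_of_real lam) = 0" and j: "j < m" for n j
    unfolding SD using Z j by (intro sum.neutral) auto
  have P1: "(deriv ^^ m) (gauss_ext a c) (complex_of_real lam + \<i> * complex_of_real (pi / a * of_int n)) \<noteq> 0"
    if Z: "zero_mult (gauss_ext a c) (complex_of_real lam) m" for n
  proof -
    define E where "E = (\<lambda>z. exp (complex_of_real a * (complex_of_real (pi / a * of_int n))^2 - 2 * \<i> * complex_of_real a * complex_of_real (pi / a * of_int n) * z))"
    from Z have m1: "1 \<le> m" and z: "\<forall>j<m. (deriv ^^ j) (gauss_ext a c) (complex_of_real lam) = 0"
      and nz: "(deriv ^^ m) (gauss_ext a c) (complex_of_real lam) \<noteq> 0"
      unfolding zero_mult_def by auto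
    have "(deriv ^^ m) (gauss_ext a c) (complex_of_real lam + \<i> * complex_of_real (pi / a * of_int n))
       = (\<Sum>i = 0..m. of_nat (m choose i) * (deriv ^^ i) E (complex_of_real lam) * (deriv ^^ (m - i)) (gauss_ext a c) (complex_of_real lam))"
      unfolding SD E_def ..
    also have "\<dots> = of_nat (m choose 0) * (deriv ^^ 0) E (complex_of_real lam) * (deriv ^^ (m - 0)) (gauss_ext a c) (complex_of_real lam)
        + (\<Sum>i = Suc 0..m. of_nat (m choose i) * (deriv ^^ i) E (complex_of_real lam) * (deriv ^^ (m - i)) (gauss_ext a c) (complex_of_real lam))"
      by (rule sum.atLeast_Suc_atMost) simp
    also have "(\<Sum>i = Suc 0..m. of_nat (m choose i) * (deriv ^^ i) E (complex_of_real lam) * (deriv ^^ (m - i)) (gauss_ext a c) (complex_of_real lam)) = 0"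
      using z m1 by (intro sum.neutral) auto
    also have "of_nat (m choose 0) * (deriv ^^ 0) E (complex_of_real lam) * (deriv ^^ (m - 0)) (gauss_ext a c) (complex_of_real lam)
        = E (complex_of_real lam) * (deriv ^^ m) (gauss_ext a c) (complex_of_real lam)" by simp
    finally show ?thesis using nz by (simp add: E_def)
  qed
  show ?thesis
  proof (intro conjI impI allI)
    fix n :: int assume Z: "zero_mult (gauss_ext a c) (complex_of_real lam) m"
    then have "\<forall>j<m. (deriv ^^ j) (gauss_ext a c) (complex_of_real lam) = 0" "1 \<le> m"
      unfolding zero_mult_def by auto
    then show "zero_mult (gauss_ext a c) (complex_of_real lam + \<i> * complex_of_real (pi / a * of_int n)) m"
      unfolding zero_mult_def using P1[OF Z] P2 by blast
  next
    fix n :: int and j assume "\<forall>j<m. (deriv ^^ j) (gauss_ext a c) (complex_of_real lam) = 0" "j < m"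
    then show "(deriv ^^ j) (gauss_ext a c) (complex_of_real lam + \<i> * complex_of_real (pi / a * of_int n)) = 0"
      by (rule P2)
  qed
qed

end
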